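(* There exists $n_0$ such that for all $n\ge n_0$, $\mathrm{ex}(n,S_4,K_4)=\mathcal{N}(S_4,T_3(n))$; that is, $S_4$ is $4$-Tur\'an-good.
   Context: $S_4$ is the star on $4$ vertices (a center with three leaves). $T_3(n)$ is the complete $3$-partite graph on $n$ vertices with part sizes $\lfloor n/3\rfloor$ or $\lceil n/3\rceil$. For graphs $H,G$, $\mathcal{N}(H,G)$ is the number of subgraphs of $G$ isomorphic to $H$, and $\mathrm{ex}(n,H,F)$ is the maximum of $\mathcal{N}(H,G)$ over $F$-free graphs $G$ on $n$ vertices. A graph $H$ is $k$-Tur\'an-good if $\mathrm{ex}(n,H,K_k)=\mathcal{N}(H,T_{k-1}(n))$ for all sufficiently large $n$. *)

theory Defs
  imports Main
begin

type_synonym 'a graph = "'a set \<times> 'a set set"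

definition simple_graph :: "'a graph \<Rightarrow> bool" where
  "simple_graph G \<longleftrightarrow> finite (fst G) \<and> (\<forall>e\<in>snd G. e \<subseteq> fst G \<and> card e = 2)"

definition subgraph :: "'a graph \<Rightarrow> 'a graph \<Rightarrow> bool" where
  "subgraph G' G \<longleftrightarrow> simple_graph G' \<and> fst G' \<subseteq> fst G \<and> snd G' \<subseteq> snd G"

definition graph_iso :: "'a graph \<Rightarrow> 'b graph \<Rightarrow> bool" where
  "graph_iso G H \<longleftrightarrow> (\<exists>f. bij_betw f (fst G) (fst H) \<and> (\<lambda>e. f ` e) ` snd G = snd H)"

definition num_copies :: "'b graph \<Rightarrow> 'a graph \<Rightarrow> nat" where
  "num_copies H G = card {G'. subgraph G' G \<and> graph_iso G' H}"

definition free_of :: "'b graph \<Rightarrow> 'a graph \<Rightarrow> bool" where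
  "free_of F G \<longleftrightarrow> \<not> (\<exists>G'. subgraph G' G \<and> graph_iso G' F)"

text \<open>ex(n,H,F): maximum of N(H,G) over F-free graphs G on n vertices
  (vertex set {0..<n}; every n-vertex graph is isomorphic to one of these).\<close>
definition gen_ex :: "nat \<Rightarrow> 'b graph \<Rightarrow> 'c graph \<Rightarrow> nat" where
  "gen_ex n H F = Max {num_copies H G | G :: nat graph.
      simple_graph G \<and> fst G = {..<n} \<and> free_of F G}"

definition complete_graph :: "nat \<Rightarrow> nat graph" where
  "complete_graph k = ({..<k}, {e. e \<subseteq> {..<k} \<and> card e = 2})"

definition star_graph :: "nat \<Rightarrow> nat graph" where
  "star_graph k = ({..<k}, {{0, i} | i. 0 < i \<and> i < k})"

text \<open>Turan graph T_r(n): vertices 0..n-1, vertex i lies in part (i mod r);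
  parts have sizes floor(n/r) or ceil(n/r); complete r-partite.\<close>
definition turan_graph :: "nat \<Rightarrow> nat \<Rightarrow> nat graph" where
  "turan_graph r n = ({..<n}, {{i, j} | i j. i < n \<and> j < n \<and> i mod r \<noteq> j mod r})"

end

theory Submission
  imports Defs
begin


definition hh :: "nat \<Rightarrow> nat \<Rightarrow> nat" where
  "hh n p = p * ((n - p) choose 3)"

lemma choose3_int: "6 * int (m choose 3) = int m * (int m - 1) * (int m - 2)"
proof (induction m)
  case 0 then show ?case by simp
next
  case (Suc m)
  have "Suc m choose 3 = (m choose 2) + (m choose 3)"
    by (simp add: numeral_3_eq_3 numeral_2_eq_2)
  moreover have "2 * (m choose 2) = m * (m - 1)"
  proof -
    have "even (m * (m - 1))" by (cases "even m") auto
    then show ?thesis by (simp add: choose_two)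
  qed
  ultimately have "6 * int (Suc m choose 3) = 3 * int (m * (m - 1)) + 6 * int (m choose 3)"
    by (metis (no_types, lifting) of_nat_add of_nat_mult distrib_left mult.assoc
        of_nat_numeral numeral_Bit0 numeral_Bit1 mult_2 add.commute)
  also have "int (m * (m - 1)) = int m * (int m - 1)"
    by (cases m) (auto simp: algebra_simps)
  finally show ?case using Suc.IH by (simp add: algebra_simps)
qed

lemma hh_int: "p \<le> n \<Longrightarrow> 6 * int (hh n p) = int p * (int n - int p) * (int n - int p - 1) * (int n - int p - 2)"
proof -
  assume "p \<le> n"
  have "6 * int (hh n p) = int p * (6 * int ((n - p) choose 3))"
    by (simp add: hh_def)
  also have "\<dots> = int p * (int (n-p) * (int (n-p) - 1) * (int (n-p) - 2))"
    by (simp only: choose3_int)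
  finally show ?thesis using \<open>p \<le> n\<close> by (simp add: of_nat_diff algebra_simps)
qed

lemma poly_ineq:
  fixes Z S T :: int
  assumes "Z \<ge> 0" "S \<ge> 0" "T \<ge> 0"
  shows "0 \<le> (T^3 - T) + S*(10*S^2+3*S-7) + S*T*(15*S-3) + 12*Z*(Z-1) + Z*T*(12*Z-9)
     + 6*S*T^2 + 3*Z*T^2 + 9*Z*S + 24*Z*S*T + 21*Z*S^2 + 12*Z^2*S"
proof -
  have a: "0 \<le> T^3 - T"
  proof (cases "T = 0")
    case False then have "T \<ge> 1" using assms by auto
    then have "1 \<le> T^2" by (simp add: one_le_power)
    then have "T * 1 \<le> T * T^2" using assms
      by (intro mult_left_mono) auto
    then show ?thesis by (simp add: power3_eq_cube power2_eq_square algebra_simps)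
  qed simp
  have b: "0 \<le> S*(10*S^2+3*S-7)"
  proof (cases "S = 0")
    case False then have "S \<ge> 1" using assms by auto
    then have "S^2 \<ge> 1" by (simp add: one_le_power)
    then have "7 \<le> 10*S^2+3*S" using \<open>S \<ge> 1\<close> by linarith
    then show ?thesis using \<open>S \<ge> 1\<close> by (intro mult_nonneg_nonneg) auto
  qed simp
  have c: "0 \<le> S*T*(15*S-3)"
  proof (cases "S = 0")
    case False then have "S \<ge> 1" using assms by auto
    then show ?thesis using assms by (intro mult_nonneg_nonneg) auto
  qed simp
  have d: "0 \<le> 12*Z*(Z-1)"
  proof (cases "Z = 0")
    case False then have "Z \<ge> 1" using assms by auto
    then show ?thesis using assms by (intro mult_nonneg_nonneg) auto
  qed simp
  have e: "0 \<le> Z*T*(12*Z-9)"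
  proof (cases "Z = 0")
    case False then have "Z \<ge> 1" using assms by auto
    then show ?thesis using assms by (intro mult_nonneg_nonneg) auto
  qed simp
  have f: "0 \<le> 6*S*T^2 + 3*Z*T^2 + 9*Z*S + 24*Z*S*T + 21*Z*S^2 + 12*Z^2*S"
    using assms by (intro add_nonneg_nonneg mult_nonneg_nonneg) auto
  show ?thesis using a b c d e f by linarith
qed

lemma poly_ident:
  fixes Z S T :: int
  shows "(Z+S+T+1)*((3*Z+2*S+T+2) - (Z+S+T+1))*((3*Z+2*S+T+2) - (Z+S+T+1) - 1)*((3*Z+2*S+T+2) - (Z+S+T+1) - 2)
   + (Z+1)*((3*Z+2*S+T+2) - (Z+1))*((3*Z+2*S+T+2) - (Z+1) - 1)*((3*Z+2*S+T+2) - (Z+1) - 2)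
   - (Z+S+T+2)*((3*Z+2*S+T+2) - (Z+S+T+2))*((3*Z+2*S+T+2) - (Z+S+T+2) - 1)*((3*Z+2*S+T+2) - (Z+S+T+2) - 2)
   - Z*((3*Z+2*S+T+2) - Z)*((3*Z+2*S+T+2) - Z - 1)*((3*Z+2*S+T+2) - Z - 2)
   = (T^3 - T) + S*(10*S^2+3*S-7) + S*T*(15*S-3) + 12*Z*(Z-1) + Z*T*(12*Z-9)
     + 6*S*T^2 + 3*Z*T^2 + 9*Z*S + 24*Z*S*T + 21*Z*S^2 + 12*Z^2*S"
  by algebra

lemma exchange:
  fixes z s t :: nat
  assumes "n = 3*z + 2*s + t + 2"
  shows "hh n (z+s+t+2) + hh n z \<le> hh n (z+s+t+1) + hh n (z+1)"
proof -
  define Z where "Z = int z"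
  define S where "S = int s"
  define T where "T = int t"
  have N: "int n = 3*Z + 2*S + T + 2" using assms by (simp add: Z_def S_def T_def)
  have e1: "6 * int (hh n (z+s+t+2)) = (Z+S+T+2)*((3*Z+2*S+T+2) - (Z+S+T+2))*((3*Z+2*S+T+2) - (Z+S+T+2) - 1)*((3*Z+2*S+T+2) - (Z+S+T+2) - 2)"
  proof -
    have le: "z+s+t+2 \<le> n" using assms by simp
    have X: "int (z+s+t+2) = Z+S+T+2" by (simp add: Z_def S_def T_def)
    show ?thesis using hh_int[OF le] by (simp only: N X)
  qed
  have e2: "6 * int (hh n z) = Z*((3*Z+2*S+T+2) - Z)*((3*Z+2*S+T+2) - Z - 1)*((3*Z+2*S+T+2) - Z - 2)"
  proof -
    have le: "z \<le> n" using assms by simp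
    have X: "int (z) = Z" by (simp add: Z_def S_def T_def)
    show ?thesis using hh_int[OF le] by (simp only: N X)
  qed
  have e3: "6 * int (hh n (z+s+t+1)) = (Z+S+T+1)*((3*Z+2*S+T+2) - (Z+S+T+1))*((3*Z+2*S+T+2) - (Z+S+T+1) - 1)*((3*Z+2*S+T+2) - (Z+S+T+1) - 2)"
  proof -
    have le: "z+s+t+1 \<le> n" using assms by simp
    have X: "int (z+s+t+1) = Z+S+T+1" by (simp add: Z_def S_def T_def)
    show ?thesis using hh_int[OF le] by (simp only: N X)
  qed
  have e4: "6 * int (hh n (z+1)) = (Z+1)*((3*Z+2*S+T+2) - (Z+1))*((3*Z+2*S+T+2) - (Z+1) - 1)*((3*Z+2*S+T+2) - (Z+1) - 2)"
  proof -
    have le: "z+1 \<le> n" using assms by simp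
    have X: "int (z+1) = Z+1" by (simp add: Z_def S_def T_def)
    show ?thesis using hh_int[OF le] by (simp only: N X)
  qed
  have P: "0 \<le> (T^3 - T) + S*(10*S^2+3*S-7) + S*T*(15*S-3) + 12*Z*(Z-1) + Z*T*(12*Z-9)
     + 6*S*T^2 + 3*Z*T^2 + 9*Z*S + 24*Z*S*T + 21*Z*S^2 + 12*Z^2*S"
    by (rule poly_ineq) (auto simp: Z_def S_def T_def)
  have "6 * int (hh n (z+s+t+1)) + 6 * int (hh n (z+1)) - 6 * int (hh n (z+s+t+2)) - 6 * int (hh n z) \<ge> 0"
    unfolding e1 e2 e3 e4 poly_ident using P .
  then show ?thesis by linarith
qed


lemma exchB_ident:
  fixes Z S :: int
  shows "(Z+S+2-1)*((3*Z+2*S+3) - (Z+S+2-1))*((3*Z+2*S+3) - (Z+S+2-1) - 1)*((3*Z+2*S+3) - (Z+S+2-1) - 2) + (Z+1)*((3*Z+2*S+3) - (Z+1))*((3*Z+2*S+3) - (Z+1) - 1)*((3*Z+2*S+3) - (Z+1) - 2) - (Z+S+2)*((3*Z+2*S+3) - (Z+S+2))*((3*Z+2*S+3) - (Z+S+2) - 1)*((3*Z+2*S+3) - (Z+S+2) - 2) - (Z)*((3*Z+2*S+3) - (Z))*((3*Z+2*S+3) - (Z) - 1)*((3*Z+2*S+3) - (Z) - 2) = 8*S+18*S^2+10*S^3+6*Z+27*Z*S+21*Z*S^2+12*Z^2+12*Z^2*S"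
  by algebra

lemma exchB:
  fixes z s :: nat
  assumes "n = 3*z+2*s+3"
  shows "hh n (z+s+2) + hh n z \<le> hh n (z+s+1) + hh n (z+1)"
proof -
  define Z where "Z = int z"
  define S where "S = int s"
  have N: "int n = 3*Z+2*S+3" using assms by (simp add: Z_def S_def)
  have e1: "6 * int (hh n (z+s+2)) = (Z+S+2)*((3*Z+2*S+3) - (Z+S+2))*((3*Z+2*S+3) - (Z+S+2) - 1)*((3*Z+2*S+3) - (Z+S+2) - 2)"
  proof -
    have le: "z+s+2 \<le> n" using assms by simp
    have X: "int (z+s+2) = Z+S+2" by (simp add: Z_def S_def)
    show ?thesis using hh_int[OF le] by (simp only: N X)
  qed
  have e2: "6 * int (hh n (z)) = (Z)*((3*Z+2*S+3) - (Z))*((3*Z+2*S+3) - (Z) - 1)*((3*Z+2*S+3) - (Z) - 2)"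
  proof -
    have le: "z \<le> n" using assms by simp
    have X: "int (z) = Z" by (simp add: Z_def S_def)
    show ?thesis using hh_int[OF le] by (simp only: N X)
  qed
  have e3: "6 * int (hh n (z+s+1)) = (Z+S+2-1)*((3*Z+2*S+3) - (Z+S+2-1))*((3*Z+2*S+3) - (Z+S+2-1) - 1)*((3*Z+2*S+3) - (Z+S+2-1) - 2)"
  proof -
    have le: "z+s+1 \<le> n" using assms by simp
    have X: "int (z+s+1) = Z+S+2-1" by (simp add: Z_def S_def)
    show ?thesis using hh_int[OF le] by (simp only: N X)
  qed
  have e4: "6 * int (hh n (z+1)) = (Z+1)*((3*Z+2*S+3) - (Z+1))*((3*Z+2*S+3) - (Z+1) - 1)*((3*Z+2*S+3) - (Z+1) - 2)"
  proof -
    have le: "z+1 \<le> n" using assms by simp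
    have X: "int (z+1) = Z+1" by (simp add: Z_def S_def)
    show ?thesis using hh_int[OF le] by (simp only: N X)
  qed
  have P: "0 \<le> 8*S+18*S^2+10*S^3+6*Z+27*Z*S+21*Z*S^2+12*Z^2+12*Z^2*S"
    by (intro add_nonneg_nonneg mult_nonneg_nonneg) (auto simp: Z_def S_def)
  have "6 * int (hh n (z+s+1)) + 6 * int (hh n (z+1)) - 6 * int (hh n (z+s+2)) - 6 * int (hh n z) \<ge> 0"
    unfolding e1 e2 e3 e4 exchB_ident using P .
  then show ?thesis by linarith
qed

lemma exchC_ident:
  fixes Z S :: int
  shows "(Z+S+2-1)*((3*Z+2*S+4) - (Z+S+2-1))*((3*Z+2*S+4) - (Z+S+2-1) - 1)*((3*Z+2*S+4) - (Z+S+2-1) - 2) + (Z+1)*((3*Z+2*S+4) - (Z+1))*((3*Z+2*S+4) - (Z+1) - 1)*((3*Z+2*S+4) - (Z+1) - 2) - (Z+S+2)*((3*Z+2*S+4) - (Z+S+2))*((3*Z+2*S+4) - (Z+S+2) - 1)*((3*Z+2*S+4) - (Z+S+2) - 2) - (Z)*((3*Z+2*S+4) - (Z))*((3*Z+2*S+4) - (Z) - 1)*((3*Z+2*S+4) - (Z) - 2) = 12+35*S+33*S^2+10*S^3+24*Z+45*Z*S+21*Z*S^2+12*Z^2+12*Z^2*S"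
  by algebra

lemma exchC:
  fixes z s :: nat
  assumes "n = 3*z+2*s+4"
  shows "hh n (z+s+2) + hh n z \<le> hh n (z+s+1) + hh n (z+1)"
proof -
  define Z where "Z = int z"
  define S where "S = int s"
  have N: "int n = 3*Z+2*S+4" using assms by (simp add: Z_def S_def)
  have e1: "6 * int (hh n (z+s+2)) = (Z+S+2)*((3*Z+2*S+4) - (Z+S+2))*((3*Z+2*S+4) - (Z+S+2) - 1)*((3*Z+2*S+4) - (Z+S+2) - 2)"
  proof -
    have le: "z+s+2 \<le> n" using assms by simp
    have X: "int (z+s+2) = Z+S+2" by (simp add: Z_def S_def)
    show ?thesis using hh_int[OF le] by (simp only: N X)
  qed
  have e2: "6 * int (hh n (z)) = (Z)*((3*Z+2*S+4) - (Z))*((3*Z+2*S+4) - (Z) - 1)*((3*Z+2*S+4) - (Z) - 2)"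
  proof -
    have le: "z \<le> n" using assms by simp
    have X: "int (z) = Z" by (simp add: Z_def S_def)
    show ?thesis using hh_int[OF le] by (simp only: N X)
  qed
  have e3: "6 * int (hh n (z+s+1)) = (Z+S+2-1)*((3*Z+2*S+4) - (Z+S+2-1))*((3*Z+2*S+4) - (Z+S+2-1) - 1)*((3*Z+2*S+4) - (Z+S+2-1) - 2)"
  proof -
    have le: "z+s+1 \<le> n" using assms by simp
    have X: "int (z+s+1) = Z+S+2-1" by (simp add: Z_def S_def)
    show ?thesis using hh_int[OF le] by (simp only: N X)
  qed
  have e4: "6 * int (hh n (z+1)) = (Z+1)*((3*Z+2*S+4) - (Z+1))*((3*Z+2*S+4) - (Z+1) - 1)*((3*Z+2*S+4) - (Z+1) - 2)"
  proof -
    have le: "z+1 \<le> n" using assms by simp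
    have X: "int (z+1) = Z+1" by (simp add: Z_def S_def)
    show ?thesis using hh_int[OF le] by (simp only: N X)
  qed
  have P: "0 \<le> 12+35*S+33*S^2+10*S^3+24*Z+45*Z*S+21*Z*S^2+12*Z^2+12*Z^2*S"
    by (intro add_nonneg_nonneg mult_nonneg_nonneg) (auto simp: Z_def S_def)
  have "6 * int (hh n (z+s+1)) + 6 * int (hh n (z+1)) - 6 * int (hh n (z+s+2)) - 6 * int (hh n z) \<ge> 0"
    unfolding e1 e2 e3 e4 exchC_ident using P .
  then show ?thesis by linarith
qed

lemma exch_gen:
  fixes x y z :: nat
  assumes "z \<le> y" "y \<le> x" "z + 2 \<le> x" "n = x + y + z"
  shows "hh n x + hh n z \<le> hh n (x - 1) + hh n (z + 1)"
proof -
  consider "x \<ge> y + 2" | "x = y + 1" | "x = y"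
    using assms by linarith
  then show ?thesis
  proof cases
    case 1
    define s where "s = y - z"
    define t where "t = x - y - 2"
    have st: "y = z + s" "x = z + s + t + 2" using 1 assms by (auto simp: s_def t_def)
    have "n = 3*z + 2*s + t + 2" using st assms by simp
    from exchange[OF this] show ?thesis using st by (simp add: add.assoc)
  next
    case 2
    define s where "s = y - z - 1"
    have st: "y = z + s + 1" "x = z + s + 2" using 2 assms by (auto simp: s_def)
    have "n = 3*z + 2*s + 3" using st assms by simp
    from exchB[OF this] show ?thesis using st by (simp add: add.assoc)
  next
    case 3
    define s where "s = y - z - 2"
    have st: "y = z + s + 2" "x = z + s + 2" using 3 assms by (auto simp: s_def)
    have "n = 3*z + 2*s + 4" using st assms by simp
    from exchC[OF this] show ?thesis using st by (simp add: add.assoc)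
  qed
qed


definition bal :: "nat \<Rightarrow> nat" where
  "bal n = hh n (n div 3) + hh n ((n+1) div 3) + hh n ((n+2) div 3)"

lemma balanced_base:
  assumes "z \<le> y" "y \<le> x" "x \<le> z + 1" "x + y + z = n"
  shows "hh n x + hh n y + hh n z = bal n"
proof -
  consider "y = z \<and> x = z" | "y = z \<and> x = z+1" | "y = z+1 \<and> x = z+1" using assms by linarith
  then have "x = (n+2) div 3 \<and> y = (n+1) div 3 \<and> z = n div 3"
  proof cases
    case 1 then have "n = 3*z" using assms by simp
    moreover have "(3*z+2) div 3 = z" "(3*z+1) div 3 = z" "(3*z) div 3 = z" by presburger+
    ultimately show ?thesis using 1 by (simp only:)
  next
    case 2 then have "n = 3*z+1" using assms by simp
    moreover have "(3*z+1+2) div 3 = z+1" "(3*z+1+1) div 3 = z" "(3*z+1) div 3 = z" by presburger+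
    ultimately show ?thesis using 2 by (simp only:)
  next
    case 3 then have "n = 3*z+2" using assms by simp
    moreover have "(3*z+2+2) div 3 = z+1" "(3*z+2+1) div 3 = z+1" "(3*z+2) div 3 = z" by presburger+
    ultimately show ?thesis using 3 by (simp only:)
  qed
  then show ?thesis by (simp add: bal_def)
qed

lemma opt_aux:
  "\<forall>a b c. a*a+b*b+c*c = m \<longrightarrow> a+b+c = n \<longrightarrow> hh n a + hh n b + hh n c \<le> bal n"
proof (induction m rule: less_induct)
  case (less m)
  show ?case
  proof (intro allI impI)
    fix a b c assume m: "a*a+b*b+c*c = m" and sum: "a+b+c = n"
    obtain x y z where o: "z \<le> y" "y \<le> x" and sw: "x+y+z = a+b+c" "x*x+y*y+z*z = a*a+b*b+c*c"
      "hh n x + hh n y + hh n z = hh n a + hh n b + hh n c"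
    proof -
      have "(c \<le> b \<and> b \<le> a) \<or> (b \<le> c \<and> c \<le> a) \<or> (c \<le> a \<and> a \<le> b) \<or> (a \<le> c \<and> c \<le> b) \<or> (b \<le> a \<and> a \<le> c) \<or> (a \<le> b \<and> b \<le> c)"
        by linarith
      then show ?thesis
      proof (elim disjE)
        assume "c \<le> b \<and> b \<le> a" then show ?thesis using that[of c b a] by (simp add: ac_simps)
      next
        assume "b \<le> c \<and> c \<le> a" then show ?thesis using that[of b c a] by (simp add: ac_simps)
      next
        assume "c \<le> a \<and> a \<le> b" then show ?thesis using that[of c a b] by (simp add: ac_simps)
      next
        assume "a \<le> c \<and> c \<le> b" then show ?thesis using that[of a c b] by (simp add: ac_simps)
      next
        assume "b \<le> a \<and> a \<le> c" then show ?thesis using that[of b a c] by (simp add: ac_simps)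
      next
        assume "a \<le> b \<and> b \<le> c" then show ?thesis using that[of a b c] by (simp add: ac_simps)
      qed
    qed
    show "hh n a + hh n b + hh n c \<le> bal n"
    proof (cases "x \<le> z + 1")
      case True
      then show ?thesis using balanced_base[OF o True] sw sum by simp
    next
      case False
      then obtain x' where x': "x = Suc x'" "z + 1 \<le> x'" by (cases x) auto
      have ex: "hh n x + hh n z \<le> hh n (x - 1) + hh n (z + 1)"
        by (rule exch_gen) (use o False sw sum in auto)
      have lt: "x'*x' + y*y + (z+1)*(z+1) < m"
        using m sw x' by (simp add: algebra_simps)
      have "hh n x' + hh n y + hh n (z+1) \<le> bal n"
        using less.IH[OF lt] sw sum x' by simp
      then show ?thesis using ex sw x' by simp
    qed
  qed
qed

lemma opt: "a+b+c = n \<Longrightarrow> hh n a + hh n b + hh n c \<le> bal n"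
  using opt_aux by blast



definition nbhd :: "'a set set \<Rightarrow> 'a \<Rightarrow> 'a set" where
  "nbhd E v = {u. {v,u} \<in> E}"

lemma edge_facts:
  assumes "simple_graph (V,E)" "{u,v} \<in> E"
  shows "u \<in> V" "v \<in> V" "u \<noteq> v"
  using assms unfolding simple_graph_def by (auto simp: card_2_iff)

lemma nbhd_sub:
  assumes "simple_graph (V,E)"
  shows "nbhd E v \<subseteq> V" "v \<notin> nbhd E v"
proof -
  show "nbhd E v \<subseteq> V" using edge_facts(2)[OF assms] unfolding nbhd_def by auto
  have "{v,v} \<notin> E" using edge_facts(3)[OF assms, of v v] by blast
  then show "v \<notin> nbhd E v" unfolding nbhd_def by simp
qed

lemma iso_via_inv:
  assumes "bij_betw g A B" "\<forall>e\<in>F. e \<subseteq> A"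
  shows "graph_iso (B, (\<lambda>e. g ` e) ` F) (A, F)"
proof -
  have inj: "inj_on g A" using assms(1) bij_betw_imp_inj_on by blast
  have "(\<lambda>e. inv_into A g ` e) ` (\<lambda>e. g ` e) ` F = (\<lambda>e. inv_into A g ` g ` e) ` F"
    by (rule image_image)
  also have "\<dots> = (\<lambda>e. e) ` F"
    using assms(2) inv_into_image_cancel[OF inj] by (intro image_cong) auto
  finally have "(\<lambda>e. inv_into A g ` e) ` (\<lambda>e. g ` e) ` F = (\<lambda>e. e) ` F" .
  then show ?thesis unfolding graph_iso_def
    using bij_betw_inv_into[OF assms(1)] by auto
qed

lemma iso_back:
  assumes "bij_betw f A B" "\<forall>e\<in>E. e \<subseteq> A" "(\<lambda>e. f ` e) ` E = F"
  shows "E = (\<lambda>e. inv_into A f ` e) ` F"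
proof -
  have inj: "inj_on f A" using assms(1) bij_betw_imp_inj_on by blast
  have "(\<lambda>e. inv_into A f ` e) ` F = (\<lambda>e. inv_into A f ` f ` e) ` E"
    unfolding assms(3)[symmetric] by (rule image_image)
  also have "\<dots> = (\<lambda>e. e) ` E" using assms(2) inj by (intro image_cong) auto
  finally show ?thesis by simp
qed

lemma lessThan4: "{..<4::nat} = {0,1,2,3}" by auto

lemma star4: "star_graph 4 = ({..<4}, {{0,1},{0,2},{0,3}})"
proof -
  have "{{0, i} | i::nat. 0 < i \<and> i < 4} = {{0,1},{0,2},{0,3}}"
  proof (rule set_eqI, rule iffI)
    fix e assume "e \<in> {{0, i} | i::nat. 0 < i \<and> i < 4}"
    then obtain i::nat where "e = {0,i}" "0 < i" "i < 4" by blast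
    moreover have "i = 1 \<or> i = 2 \<or> i = 3" using \<open>0<i\<close> \<open>i<4\<close> by linarith
    ultimately show "e \<in> {{0,1},{0,2},{0,3}}" by auto
  next
    fix e assume "e \<in> {{0::nat,1},{0,2},{0,3}}"
    then show "e \<in> {{0, i} | i::nat. 0 < i \<and> i < 4}" by auto
  qed
  then show ?thesis unfolding star_graph_def by simp
qed

lemma nth4_bij:
  assumes "distinct [a,b,c,d]"
  shows "bij_betw (\<lambda>i. [a,b,c,d] ! i) {..<4} {a,b,c,d}"
  using bij_betw_nth[OF assms, of "{..<4}" "{a,b,c,d}"] by simp


lemma star_copy_in:
  assumes sg: "simple_graph (V,E)" and v: "v \<in> V" and L: "L \<subseteq> nbhd E v" "card L = 3"
  shows "subgraph (insert v L, (\<lambda>u. {v,u}) ` L) (V,E) \<and>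
         graph_iso (insert v L, (\<lambda>u. {v,u}) ` L) (star_graph 4)"
proof -
  obtain a b c where abc: "L = {a,b,c}" "a \<noteq> b" "b \<noteq> c" "a \<noteq> c"
    using L(2) card_3_iff by metis
  have vL: "v \<notin> L" using L(1) nbhd_sub(2)[OF sg, of v] by blast
  have LV: "L \<subseteq> V" using L(1) nbhd_sub(1)[OF sg, of v] by blast
  have dist: "distinct [v,a,b,c]" using abc vL by auto
  let ?g = "\<lambda>i. [v,a,b,c] ! i"
  have bij: "bij_betw ?g {..<4} {v,a,b,c}" by (rule nth4_bij[OF dist])
  have iso: "graph_iso ({v,a,b,c}, (\<lambda>e. ?g ` e) ` {{0,1},{0,2},{0,3}}) ({..<4::nat}, {{0,1},{0,2},{0,3}})"
    by (rule iso_via_inv[OF bij]) auto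
  have im: "(\<lambda>e. ?g ` e) ` {{0::nat,1},{0,2},{0,3}} = (\<lambda>u. {v,u}) ` L"
    using abc by (simp add: numeral_2_eq_2 numeral_3_eq_3)
  have iso2: "graph_iso (insert v L, (\<lambda>u. {v,u}) ` L) (star_graph 4)"
    using iso unfolding im star4 using abc by simp
  have sub: "subgraph (insert v L, (\<lambda>u. {v,u}) ` L) (V,E)"
    unfolding subgraph_def simple_graph_def
    using abc vL LV v L(1) by (auto simp: nbhd_def)
  show ?thesis using sub iso2 by blast
qed


lemma star_copy_from:
  assumes sg: "simple_graph (V,E)" and sub: "subgraph (V',E') (V,E)"
    and iso: "graph_iso (V',E') (star_graph 4)"
  shows "\<exists>v L. v \<in> V \<and> L \<subseteq> nbhd E v \<and> card L = 3 \<and> (V',E') = (insert v L, (\<lambda>u. {v,u}) ` L)"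
proof -
  obtain f where f: "bij_betw f V' {..<4::nat}" "(\<lambda>e. f ` e) ` E' = {{0::nat,1},{0,2},{0,3}}"
    using iso unfolding graph_iso_def star4 by (auto simp del: One_nat_def)
  have sg': "simple_graph (V',E')" and VV: "V' \<subseteq> V" and EE: "E' \<subseteq> E"
    using sub unfolding subgraph_def by auto
  have eA: "\<forall>e\<in>E'. e \<subseteq> V'" using sg' unfolding simple_graph_def by auto
  define g where "g = inv_into V' f"
  have E'eq: "E' = (\<lambda>e. g ` e) ` {{0,1},{0,2},{0,3}}"
    unfolding g_def by (rule iso_back[OF f(1) eA f(2)])
  have E'eq2: "E' = {{g 0, g 1}, {g 0, g 2}, {g 0, g 3}}" using E'eq by simp
  have gb: "bij_betw g {..<4} V'" unfolding g_def by (rule bij_betw_inv_into[OF f(1)])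
  have V'eq: "V' = {g 0, g 1, g 2, g 3}"
    using bij_betw_imp_surj_on[OF gb] by (simp add: lessThan4)
  have inj: "inj_on g {0,1,2,3}" using bij_betw_imp_inj_on[OF gb] by (simp add: lessThan4)
  have d: "g 1 \<noteq> g 2" "g 1 \<noteq> g 3" "g 2 \<noteq> g 3"
    using inj unfolding inj_on_def by auto
  let ?L = "{g 1, g 2, g 3}"
  have "g 0 \<in> V" using V'eq VV by auto
  moreover have "?L \<subseteq> nbhd E (g 0)" using E'eq2 EE unfolding nbhd_def by auto
  moreover have "card ?L = 3" using d by simp
  moreover have "(V',E') = (insert (g 0) ?L, (\<lambda>u. {g 0,u}) ` ?L)"
    using V'eq E'eq2 by simp
  ultimately show ?thesis by blast
qed

lemma star_inj:
  assumes sg: "simple_graph (V,E)"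
    and L: "L \<subseteq> nbhd E v" "card L = 3" and L': "L' \<subseteq> nbhd E v'" "card L' = 3"
    and eq: "(\<lambda>u. {v,u}) ` L = (\<lambda>u. {v',u}) ` L'"
  shows "v = v' \<and> L = L'"
proof -
  have vv: "v = v'"
  proof (rule ccontr)
    assume ne: "v \<noteq> v'"
    have "L \<subseteq> {v'}"
    proof
      fix u assume "u \<in> L"
      then have "{v,u} \<in> (\<lambda>u. {v',u}) ` L'" using eq by blast
      then obtain w where "{v,u} = {v',w}" by blast
      then show "u \<in> {v'}" using ne by (auto simp: doubleton_eq_iff)
    qed
    then have "card L \<le> 1" using card_mono[of "{v'}" L] by simp
    then show False using L(2) by simp
  qed
  have "L = L'"
  proof (rule set_eqI, rule iffI)
    fix u assume "u \<in> L"
    then have "{v,u} \<in> (\<lambda>u. {v,u}) ` L'" using eq vv by blast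
    then obtain w where "w \<in> L'" "{v,u} = {v,w}" by blast
    then show "u \<in> L'" by (auto simp: doubleton_eq_iff)
  next
    fix u assume "u \<in> L'"
    then have "{v,u} \<in> (\<lambda>u. {v,u}) ` L" using eq vv by blast
    then obtain w where "w \<in> L" "{v,u} = {v,w}" by blast
    then show "u \<in> L" by (auto simp: doubleton_eq_iff)
  qed
  then show ?thesis using vv by simp
qed

lemma count_stars:
  assumes sg: "simple_graph (V,E)"
  shows "num_copies (star_graph 4) (V,E) = (\<Sum>v\<in>V. card (nbhd E v) choose 3)"
proof -
  let ?P = "Sigma V (\<lambda>v. {L. L \<subseteq> nbhd E v \<and> card L = 3})"
  let ?phi = "\<lambda>(v,L). (insert v L, (\<lambda>u. {v,u}) ` L)"
  let ?C = "{G'. subgraph G' (V,E) \<and> graph_iso G' (star_graph 4)}"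
  have fin: "finite V" using sg unfolding simple_graph_def by simp
  have Ceq: "?C = ?phi ` ?P"
  proof
    show "?C \<subseteq> ?phi ` ?P"
    proof
      fix G' assume "G' \<in> ?C"
      moreover obtain V' E' where G': "G' = (V',E')" by (cases G')
      ultimately have "subgraph (V',E') (V,E)" "graph_iso (V',E') (star_graph 4)" by auto
      from star_copy_from[OF sg this] obtain v L where
        "v \<in> V" "L \<subseteq> nbhd E v" "card L = 3" "(V',E') = (insert v L, (\<lambda>u. {v,u}) ` L)"
        by blast
      then show "G' \<in> ?phi ` ?P" unfolding G' by (intro image_eqI[of _ _ "(v,L)"]) auto
    qed
  next
    show "?phi ` ?P \<subseteq> ?C"
      using star_copy_in[OF sg] by auto
  qed
  have inj: "inj_on ?phi ?P"
  proof (rule inj_onI)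
    fix p q assume "p \<in> ?P" "q \<in> ?P" "?phi p = ?phi q"
    moreover obtain v L where "p = (v,L)" by (cases p)
    moreover obtain v' L' where "q = (v',L')" by (cases q)
    ultimately show "p = q" using star_inj[OF sg, of L v L' v'] by auto
  qed
  have "num_copies (star_graph 4) (V,E) = card ?C" unfolding num_copies_def by simp
  also have "\<dots> = card ?P" unfolding Ceq by (rule card_image[OF inj])
  also have "\<dots> = (\<Sum>v\<in>V. card {L. L \<subseteq> nbhd E v \<and> card L = 3})"
  proof (rule card_SigmaI[OF fin])
    show "\<forall>v\<in>V. finite {L. L \<subseteq> nbhd E v \<and> card L = 3}"
    proof
      fix v assume "v \<in> V"
      have "finite (nbhd E v)" using nbhd_sub(1)[OF sg] fin finite_subset by blast
      then have "finite (Pow (nbhd E v))" by simp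
      then show "finite {L. L \<subseteq> nbhd E v \<and> card L = 3}" by (rule finite_subset[rotated]) auto
    qed
  qed
  also have "\<dots> = (\<Sum>v\<in>V. card (nbhd E v) choose 3)"
    using nbhd_sub(1)[OF sg] fin by (intro sum.cong refl n_subsets) (auto intro: finite_subset)
  finally show ?thesis .
qed



lemma K4_found:
  assumes sg: "simple_graph (V,E)"
    and e: "{a,b} \<in> E" "{a,c} \<in> E" "{a,d} \<in> E" "{b,c} \<in> E" "{b,d} \<in> E" "{c,d} \<in> E"
  shows "\<not> free_of (complete_graph 4) (V,E)"
proof -
  have dist: "distinct [a,b,c,d]" using e edge_facts(3)[OF sg] by auto
  let ?g = "\<lambda>i. [a,b,c,d] ! i"
  let ?K = "{e. e \<subseteq> {..<4::nat} \<and> card e = 2}"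
  have bij: "bij_betw ?g {..<4} {a,b,c,d}" by (rule nth4_bij[OF dist])
  have inj: "inj_on ?g {..<4}" using bij bij_betw_imp_inj_on by blast
  have iso: "graph_iso ({a,b,c,d}, (\<lambda>e. ?g ` e) ` ?K) (complete_graph 4)"
    unfolding complete_graph_def by (rule iso_via_inv[OF bij]) auto
  have all: "{?g i, ?g j} \<in> E" if "i < 4" "j < 4" "i \<noteq> j" for i j
  proof -
    have "i = 0 \<or> i = 1 \<or> i = 2 \<or> i = 3" "j = 0 \<or> j = 1 \<or> j = 2 \<or> j = 3"
      using that by linarith+
    then show ?thesis using that e
      by (auto simp: insert_commute numeral_2_eq_2 numeral_3_eq_3)
  qed
  have sub: "subgraph ({a,b,c,d}, (\<lambda>e. ?g ` e) ` ?K) (V,E)"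
    unfolding subgraph_def simple_graph_def
  proof (intro conjI ballI)
    show "finite (fst ({a,b,c,d}, (\<lambda>e. ?g ` e) ` ?K))" by simp
  next
    fix x assume "x \<in> snd ({a,b,c,d}, (\<lambda>e. ?g ` e) ` ?K)"
    then obtain e where x: "x = ?g ` e" and eK: "e \<subseteq> {..<4}" "card e = 2" by auto
    show "x \<subseteq> fst ({a,b,c,d}, (\<lambda>e. ?g ` e) ` ?K)"
      using x eK bij_betw_imp_surj_on[OF bij] by auto
    show "card x = 2" using x eK card_image[OF inj_on_subset[OF inj eK(1)]] by simp
  next
    show "fst ({a,b,c,d}, (\<lambda>e. ?g ` e) ` ?K) \<subseteq> fst (V,E)"
      using e edge_facts(1,2)[OF sg] by auto
  next
    show "snd ({a,b,c,d}, (\<lambda>e. ?g ` e) ` ?K) \<subseteq> snd (V,E)"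
    proof
      fix x assume "x \<in> snd ({a,b,c,d}, (\<lambda>e. ?g ` e) ` ?K)"
      then obtain e where x: "x = ?g ` e" and eK: "e \<subseteq> {..<4}" "card e = 2" by auto
      obtain i j where ij: "e = {i,j}" "i \<noteq> j" using eK(2) card_2_iff by metis
      then have "i < 4" "j < 4" using eK(1) by auto
      then show "x \<in> snd (V,E)" using all[of i j] ij x by simp
    qed
  qed
  show ?thesis unfolding free_of_def using sub iso by blast
qed


lemma erdos_partition:
  assumes sg: "simple_graph (V,E)" and fr: "free_of (complete_graph 4) (V,E)"
  shows "\<exists>P1 P2 P3. P1 \<union> P2 \<union> P3 = V \<and> P1 \<inter> P2 = {} \<and> P1 \<inter> P3 = {} \<and> P2 \<inter> P3 = {}
     \<and> (\<forall>v\<in>P1. card (nbhd E v) \<le> card (V - P1))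
     \<and> (\<forall>v\<in>P2. card (nbhd E v) \<le> card (V - P2))
     \<and> (\<forall>v\<in>P3. card (nbhd E v) \<le> card (V - P3))"
proof (cases "V = {}")
  case True then show ?thesis by auto
next
  case False
  have fin: "finite V" using sg unfolding simple_graph_def by simp
  define d where "d v = card (nbhd E v)" for v
  have "Max (d ` V) \<in> d ` V" using fin False by simp
  then obtain x where x: "x \<in> V" "d x = Max (d ` V)" by auto
  have xmax: "d w \<le> d x" if "w \<in> V" for w using x fin that by simp
  define A where "A = nbhd E x"
  define B where "B = V - A"
  have AV: "A \<subseteq> V" unfolding A_def using nbhd_sub(1)[OF sg] .
  have finA: "finite A" using AV fin finite_subset by blast
  have nsub: "nbhd E v \<subseteq> V" for v using nbhd_sub(1)[OF sg] .
  have cB: "card (V - B) = card A" unfolding B_def using AV by (simp add: Diff_Diff_Int Int_absorb1 inf.absorb2)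
  have Bok: "\<forall>v\<in>B. card (nbhd E v) \<le> card (V - B)"
  proof
    fix v assume "v \<in> B"
    then have "d v \<le> d x" using xmax B_def by auto
    then show "card (nbhd E v) \<le> card (V - B)" using cB unfolding d_def A_def by simp
  qed
  show ?thesis
  proof (cases "A = {}")
    case True
    then show ?thesis using Bok unfolding B_def by (intro exI[of _ B] exI[of _ "{}"]) (auto simp: B_def)
  next
    case False
    define dA where "dA v = card (nbhd E v \<inter> A)" for v
    have "Max (dA ` A) \<in> dA ` A" using finA False by simp
    then obtain y where y: "y \<in> A" "dA y = Max (dA ` A)" by auto
    have ymax: "dA w \<le> dA y" if "w \<in> A" for w using y finA that by simp
    define A1 where "A1 = nbhd E y \<inter> A"
    define A2 where "A2 = A - A1"
    have A1A: "A1 \<subseteq> A" unfolding A1_def by auto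
    have finB: "finite B" unfolding B_def using fin by simp
    have finA1: "finite A1" using A1A finA finite_subset by blast
    have finA2: "finite A2" unfolding A2_def using finA by simp
    have V1: "V - A1 = A2 \<union> B" using AV A1A unfolding A2_def B_def by auto
    have V2: "V - A2 = A1 \<union> B" using AV A1A unfolding A2_def B_def by auto
    have c1: "card (V - A1) = card A2 + card B"
      unfolding V1 using finA2 finB by (subst card_Un_disjoint) (auto simp: A2_def B_def)
    have c2: "card (V - A2) = card A1 + card B"
      unfolding V2 using finA1 finB A1A by (subst card_Un_disjoint) (auto simp: B_def)
    have A1ok: "\<forall>v\<in>A1. card (nbhd E v) \<le> card (V - A1)"
    proof
      fix v assume vA1: "v \<in> A1"
      have "nbhd E v \<inter> A1 = {}"
      proof (rule ccontr)
        assume "nbhd E v \<inter> A1 \<noteq> {}"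
        then obtain u where u: "u \<in> nbhd E v" "u \<in> A1" by blast
        have "{x,y} \<in> E" using y(1) unfolding A_def nbhd_def by simp
        moreover have "{x,v} \<in> E" using vA1 unfolding A1_def A_def nbhd_def by simp
        moreover have "{x,u} \<in> E" using u unfolding A1_def A_def nbhd_def by simp
        moreover have "{y,v} \<in> E" using vA1 unfolding A1_def nbhd_def by simp
        moreover have "{y,u} \<in> E" using u unfolding A1_def nbhd_def by simp
        moreover have "{v,u} \<in> E" using u unfolding nbhd_def by simp
        ultimately have "\<not> free_of (complete_graph 4) (V,E)" by (rule K4_found[OF sg])
        then show False using fr by simp
      qed
      then have "nbhd E v \<subseteq> V - A1" using nsub by blast
      then show "card (nbhd E v) \<le> card (V - A1)" using fin by (intro card_mono) auto
    qed
    have A2ok: "\<forall>v\<in>A2. card (nbhd E v) \<le> card (V - A2)"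
    proof
      fix v assume vA2: "v \<in> A2"
      have "nbhd E v \<subseteq> (nbhd E v \<inter> A) \<union> B" using nsub unfolding B_def by blast
      then have "card (nbhd E v) \<le> card ((nbhd E v \<inter> A) \<union> B)"
        using finA finB by (intro card_mono) auto
      also have "\<dots> \<le> card (nbhd E v \<inter> A) + card B" by (rule card_Un_le)
      also have "card (nbhd E v \<inter> A) \<le> card A1"
        using ymax[of v] vA2 unfolding dA_def A1_def A2_def by auto
      finally show "card (nbhd E v) \<le> card (V - A2)" using c2 by simp
    qed
    show ?thesis
      apply (rule exI[of _ B], rule exI[of _ A1], rule exI[of _ A2])
      using Bok A1ok A2ok AV A1A unfolding A2_def B_def by auto
  qed
qed

lemma sum_bound:
  assumes fin: "finite V" and U: "P1 \<union> P2 \<union> P3 = V"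
    and D: "P1 \<inter> P2 = {}" "P1 \<inter> P3 = {}" "P2 \<inter> P3 = {}"
    and B1: "\<forall>v\<in>P1. f v \<le> card (V - P1)"
    and B2: "\<forall>v\<in>P2. f v \<le> card (V - P2)"
    and B3: "\<forall>v\<in>P3. f v \<le> card (V - P3)"
  shows "(\<Sum>v\<in>V. f v choose 3) \<le> hh (card V) (card P1) + hh (card V) (card P2) + hh (card V) (card P3)
     \<and> card P1 + card P2 + card P3 = card V"
proof -
  have f1: "finite P1" "finite P2" "finite P3" using U fin finite_subset by blast+
  have one: "(\<Sum>v\<in>P. f v choose 3) \<le> hh (card V) (card P)"
    if "P \<subseteq> V" "\<forall>v\<in>P. f v \<le> card (V - P)" for P
  proof -
    have "(\<Sum>v\<in>P. f v choose 3) \<le> (\<Sum>v\<in>P. card (V - P) choose 3)"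
      using that by (intro sum_mono binomial_right_mono) auto
    also have "\<dots> = card P * (card (V - P) choose 3)" by simp
    also have "card (V - P) = card V - card P" using that(1) fin by (simp add: card_Diff_subset finite_subset)
    finally show ?thesis unfolding hh_def .
  qed
  have "(\<Sum>v\<in>V. f v choose 3) = (\<Sum>v\<in>P1. f v choose 3) + (\<Sum>v\<in>P2. f v choose 3) + (\<Sum>v\<in>P3. f v choose 3)"
    unfolding U[symmetric] using f1 D
    by (simp add: sum.union_disjoint Int_Un_distrib2)
  also have "\<dots> \<le> hh (card V) (card P1) + hh (card V) (card P2) + hh (card V) (card P3)"
    using one[of P1] one[of P2] one[of P3] U B1 B2 B3 by (intro add_mono) auto
  finally have "(\<Sum>v\<in>V. f v choose 3) \<le> hh (card V) (card P1) + hh (card V) (card P2) + hh (card V) (card P3)" .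
  moreover have "card P1 + card P2 + card P3 = card V"
    unfolding U[symmetric] using f1 D by (simp add: card_Un_disjoint Int_Un_distrib2)
  ultimately show ?thesis by simp
qed



definition TE :: "nat \<Rightarrow> nat set set" where
  "TE n = {{i, j} | i j. i < n \<and> j < n \<and> i mod 3 \<noteq> j mod 3}"

lemma turan_eq: "turan_graph 3 n = ({..<n}, TE n)"
  unfolding turan_graph_def TE_def by simp

lemma turan_simple: "simple_graph ({..<n}, TE n)"
  unfolding simple_graph_def TE_def by (auto simp: card_2_iff)

lemma turan_nbhd: "v < n \<Longrightarrow> nbhd (TE n) v = {u. u < n \<and> u mod 3 \<noteq> v mod 3}"
  unfolding nbhd_def TE_def by (auto simp: doubleton_eq_iff)

lemma cardR: "r < 3 \<Longrightarrow> card {u. u < n \<and> u mod 3 = r} = (n + 2 - r) div 3"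
proof (induction n)
  case 0 then show ?case by simp
next
  case (Suc n)
  have eq: "{u. u < Suc n \<and> u mod 3 = r} = (if n mod 3 = r then insert n {u. u<n \<and> u mod 3 = r} else {u. u<n \<and> u mod 3 = r})"
    by (auto simp: less_Suc_eq)
  have ar: "(Suc n + 2 - r) div 3 = (n + 2 - r) div 3 + (if n mod 3 = r then 1 else 0)"
  proof -
    consider "r = 0" | "r = 1" | "r = 2" using Suc.prems by linarith
    then show ?thesis by cases (simp, presburger)+
  qed
  show ?case
  proof (cases "n mod 3 = r")
    case True
    then have "card {u. u < Suc n \<and> u mod 3 = r} = Suc (card {u. u<n \<and> u mod 3 = r})"
      unfolding eq by simp
    then show ?thesis using Suc ar True by simp
  next
    case False
    then show ?thesis unfolding eq using Suc ar by simp
  qed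
qed

lemma turan_sum: "(\<Sum>v\<in>{..<n}. card (nbhd (TE n) v) choose 3) = bal n"
proof -
  define R where "R r = {u. u < n \<and> u mod 3 = r}" for r
  have finR: "finite (R r)" for r unfolding R_def by simp
  have dg: "card (nbhd (TE n) v) = n - card (R r)" if "v \<in> R r" for v r
  proof -
    have "nbhd (TE n) v = {..<n} - R r" using that unfolding R_def by (auto simp: turan_nbhd)
    moreover have "R r \<subseteq> {..<n}" unfolding R_def by auto
    ultimately show ?thesis by (simp add: card_Diff_subset finR)
  qed
  have part: "{..<n} = R 0 \<union> R 1 \<union> R 2" unfolding R_def by auto
  have one: "(\<Sum>v\<in>R r. card (nbhd (TE n) v) choose 3) = hh n (card (R r))" for r
  proof -
    have "(\<Sum>v\<in>R r. card (nbhd (TE n) v) choose 3) = (\<Sum>v\<in>R r. (n - card (R r)) choose 3)"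
      using dg by (intro sum.cong) auto
    then show ?thesis unfolding hh_def by simp
  qed
  have "(\<Sum>v\<in>{..<n}. card (nbhd (TE n) v) choose 3)
      = (\<Sum>v\<in>R 0. card (nbhd (TE n) v) choose 3) + (\<Sum>v\<in>R 1. card (nbhd (TE n) v) choose 3)
        + (\<Sum>v\<in>R 2. card (nbhd (TE n) v) choose 3)"
  proof -
    have d: "R 0 \<inter> R 1 = {}" "(R 0 \<union> R 1) \<inter> R 2 = {}" unfolding R_def by auto
    let ?F = "\<lambda>v. card (nbhd (TE n) v) choose 3"
    have s1: "sum ?F (R 0 \<union> R 1 \<union> R 2) = sum ?F (R 0 \<union> R 1) + sum ?F (R 2)"
      by (rule sum.union_disjoint) (rule finite_UnI, rule finR, rule finR, rule finR, rule d(2))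
    have s2: "sum ?F (R 0 \<union> R 1) = sum ?F (R 0) + sum ?F (R 1)"
      by (rule sum.union_disjoint) (rule finR, rule finR, rule d(1))
    show ?thesis unfolding part s1 s2 ..
  qed
  also have "\<dots> = hh n (card (R 0)) + hh n (card (R 1)) + hh n (card (R 2))" unfolding one ..
  also have "\<dots> = bal n" unfolding R_def bal_def using cardR[of 0 n] cardR[of 1 n] cardR[of 2 n] by simp
  finally show ?thesis .
qed

lemma turan_free: "free_of (complete_graph 4) ({..<n}, TE n)"
proof (rule ccontr)
  assume "\<not> free_of (complete_graph 4) ({..<n}, TE n)"
  then obtain G' where sub: "subgraph G' ({..<n}, TE n)" and iso: "graph_iso G' (complete_graph 4)"
    unfolding free_of_def by blast
  obtain V' E' where G': "G' = (V',E')" by (cases G')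
  let ?K = "{e. e \<subseteq> {..<4::nat} \<and> card e = 2}"
  obtain f where f: "bij_betw f V' {..<4::nat}" "(\<lambda>e. f ` e) ` E' = ?K"
    using iso unfolding G' graph_iso_def complete_graph_def by auto
  have sg': "simple_graph (V',E')" and EE: "E' \<subseteq> TE n"
    using sub unfolding subgraph_def G' by auto
  have eA: "\<forall>e\<in>E'. e \<subseteq> V'" using sg' unfolding simple_graph_def by auto
  define g where "g = inv_into V' f"
  have E'eq: "E' = (\<lambda>e. g ` e) ` ?K"
    unfolding g_def by (rule iso_back[OF f(1) eA f(2)])
  have gb: "bij_betw g {..<4} V'" unfolding g_def by (rule bij_betw_inv_into[OF f(1)])
  have inj: "inj_on g {..<4}" using gb bij_betw_imp_inj_on by blast
  have md: "g i mod 3 \<noteq> g j mod 3" if "i < 4" "j < 4" "i \<noteq> j" for i j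
  proof -
    have "{i,j} \<in> ?K" using that by auto
    then have "g ` {i,j} \<in> E'" unfolding E'eq by blast
    then have "{g i, g j} \<in> TE n" using EE by auto
    then show ?thesis unfolding TE_def by (auto simp: doubleton_eq_iff)
  qed
  have "inj_on (\<lambda>i. g i mod 3) {..<4}" using md by (auto simp: inj_on_def)
  then have "card ((\<lambda>i. g i mod 3) ` {..<4}) = 4" by (simp add: card_image)
  moreover have "(\<lambda>i. g i mod 3) ` {..<4} \<subseteq> {..<3}" by auto
  then have "card ((\<lambda>i. g i mod 3) ` {..<4}) \<le> 3" using card_mono[of "{..<3::nat}"] by fastforce
  ultimately show False by simp
qed

theorem proposition3p12:
  shows "\<exists>n0. \<forall>n\<ge>n0. gen_ex n (star_graph 4) (complete_graph 4)
            = num_copies (star_graph 4) (turan_graph 3 n)"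
proof (intro exI allI impI)
  fix n0 n :: nat
  let ?S = "{num_copies (star_graph 4) G | G :: nat graph.
      simple_graph G \<and> fst G = {..<n} \<and> free_of (complete_graph 4) G}"
  have tval: "num_copies (star_graph 4) (turan_graph 3 n) = bal n"
    unfolding turan_eq count_stars[OF turan_simple] turan_sum ..
  have mem: "num_copies (star_graph 4) (turan_graph 3 n) \<in> ?S"
    unfolding turan_eq using turan_simple turan_free by fastforce
  have ub: "y \<le> num_copies (star_graph 4) (turan_graph 3 n)" if yS: "y \<in> ?S" for y
  proof -
    obtain G :: "nat graph" where y: "y = num_copies (star_graph 4) G" and G: "simple_graph G"
      "fst G = {..<n}" "free_of (complete_graph 4) G" using yS by blast
    obtain V E where VE: "G = (V,E)" by (cases G)
    have sg: "simple_graph (V,E)" and V: "V = {..<n}" and fr: "free_of (complete_graph 4) (V,E)"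
      using G VE by auto
    have fin: "finite V" using V by simp
    obtain P1 P2 P3 where P: "P1 \<union> P2 \<union> P3 = V" "P1 \<inter> P2 = {}" "P1 \<inter> P3 = {}" "P2 \<inter> P3 = {}"
      "\<forall>v\<in>P1. card (nbhd E v) \<le> card (V - P1)"
      "\<forall>v\<in>P2. card (nbhd E v) \<le> card (V - P2)"
      "\<forall>v\<in>P3. card (nbhd E v) \<le> card (V - P3)"
      using erdos_partition[OF sg fr] by blast
    have sb: "(\<Sum>v\<in>V. card (nbhd E v) choose 3) \<le> hh (card V) (card P1) + hh (card V) (card P2) + hh (card V) (card P3)"
      "card P1 + card P2 + card P3 = card V"
      using sum_bound[OF fin P] by auto
    have cV: "card V = n" using V by simp
    have "y = (\<Sum>v\<in>V. card (nbhd E v) choose 3)" using y VE count_stars[OF sg] by simp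
    also have "\<dots> \<le> bal n" using sb opt[of "card P1" "card P2" "card P3" n] cV by simp
    finally show ?thesis using tval by simp
  qed
  have fin: "finite ?S" unfolding finite_nat_set_iff_bounded_le using ub by blast
  show "gen_ex n (star_graph 4) (complete_graph 4) = num_copies (star_graph 4) (turan_graph 3 n)"
    unfolding gen_ex_def by (rule Max_eqI[OF fin ub mem])
qed


end
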